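(* (Bernstein inequality.) Let $c\in\mathbb{R}$, $T>0$ and $f\in\widetilde{B}^2_{c,T}$. Then for every $r\in\mathbb{N}$, $$\|\Theta_c^rf\|_{X^2_c}\le T^r\|f\|_{X^2_c}.$$
   Context: $\mathbb{R}^+=(0,\infty)$, $\Omega=\mathbb{C}\setminus[0,\infty)$. For $c\in\mathbb{R}$, $X^2_c$ is the space of measurable $f:\mathbb{R}^+\to\mathbb{C}$ with $f(x)x^{c-1/2}\in L^2(\mathbb{R}^+)$, normed by $\|f\|_{X^2_c}=\big(\int_0^\infty |f(u)|^2u^{2c-1}\,du\big)^{1/2}$. The Mellin derivative is $\Theta_c f(x)=xf'(x)+cf(x)$, with $\Theta_c^0 f=f$ and $\Theta_c^r=\Theta_c(\Theta_c^{r-1})$. The Mellin–Bernstein space $\widetilde{B}^2_{c,T}$ consists of all $f\in X^2_c$ such that $g(x):=x^cf(x)$ has an analytic extension to the Riemann surface of the logarithm, given by analytic branches $g_k:\Omega\to\mathbb{C}$, $k\in\mathbb{Z}$, with: (i) for every $x>0$ the limits $g_k^+(x)=\lim_{\varepsilon\to0^+}g_k(x+i\varepsilon)$ and $g_k^-(x)=\lim_{\varepsilon\to0^+}g_k(x-i\varepsilon)$ exist, $g_k^-(x)=g_{k+1}^+(x)$, and $g_0^+(x)=g(x)$; (ii) for every $x>0$ and every open disk $U_x$ in the right half-plane centered at $x$, the function $\psi_k:U_x\to\mathbb{C}$ equal to $g_k(z)$ for $\Im z<0$, to $g_k^-(z)$ for $z\in U_x\cap\mathbb{R}$, and to $g_{k+1}(z)$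 for $\Im z>0$, is analytic; (iii) there is $C>0$ such that $|g_k(re^{i\theta})|\le Ce^{T|2\pi k+\theta|}$ for all $k\in\mathbb{Z}$, $\theta\in[0,2\pi]$, $r>0$; (iv) for each $k$, $\lim_{r\to0}g_k(re^{i\theta})=\lim_{r\to\infty}g_k(re^{i\theta})=0$ uniformly in $\theta\in[0,2\pi]$. In (iii) and (iv), $g_k(re^{i0})$ means $g_k^+(r)$ and $g_k(re^{2\pi i})$ means $g_k^-(r)$. *)

theory Defs
  imports "HOL-Analysis.Analysis"
begin

definition X2 :: "real \<Rightarrow> (real \<Rightarrow> complex) \<Rightarrow> bool" where
  "X2 c f \<longleftrightarrow> set_borel_measurable lborel {0<..} f \<and>
     set_integrable lborel {0<..} (\<lambda>u. (cmod (f u))\<^sup>2 * u powr (2 * c - 1))"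

definition X2_norm :: "real \<Rightarrow> (real \<Rightarrow> complex) \<Rightarrow> real" where
  "X2_norm c f = sqrt (LINT u:{0<..}|lborel. (cmod (f u))\<^sup>2 * u powr (2 * c - 1))"

definition mellin_deriv :: "real \<Rightarrow> (real \<Rightarrow> complex) \<Rightarrow> real \<Rightarrow> complex" where
  "mellin_deriv c f x = of_real x * vector_derivative f (at x) + of_real c * f x"

definition slit_plane :: "complex set" where
  "slit_plane = UNIV - complex_of_real ` {0..}"

definition bplus :: "(complex \<Rightarrow> complex) \<Rightarrow> real \<Rightarrow> complex" where
  "bplus h x = Lim (at_right 0) (\<lambda>e::real. h (of_real x + \<i> * of_real e))"

definition bminus :: "(complex \<Rightarrow> complex) \<Rightarrow> real \<Rightarrow> complex" where
  "bminus h x = Lim (at_right 0) (\<lambda>e::real. h (of_real x - \<i> * of_real e))"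

definition glued :: "(int \<Rightarrow> complex \<Rightarrow> complex) \<Rightarrow> int \<Rightarrow> complex \<Rightarrow> complex" where
  "glued g k z = (if Im z < 0 then g k z
                  else if Im z = 0 then bminus (g k) (Re z)
                  else g (k + 1) z)"

definition polar_val :: "(int \<Rightarrow> complex \<Rightarrow> complex) \<Rightarrow> int \<Rightarrow> real \<Rightarrow> real \<Rightarrow> complex" where
  "polar_val g k r \<theta> = (if \<theta> = 0 then bplus (g k) r
                        else if \<theta> = 2 * pi then bminus (g k) r
                        else g k (of_real r * cis \<theta>))"

definition mellin_bernstein :: "real \<Rightarrow> real \<Rightarrow> (real \<Rightarrow> complex) \<Rightarrow> bool" where
  "mellin_bernstein c T f \<longleftrightarrow> X2 c f \<and>
    (\<exists>g :: int \<Rightarrow> complex \<Rightarrow> complex.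
       (\<forall>k. g k analytic_on slit_plane) \<and>
       \<comment> \<open>(i)\<close>
       (\<forall>k. \<forall>x>0. (\<exists>l. ((\<lambda>e::real. g k (of_real x + \<i> * of_real e)) \<longlongrightarrow> l) (at_right 0))
                 \<and> (\<exists>l. ((\<lambda>e::real. g k (of_real x - \<i> * of_real e)) \<longlongrightarrow> l) (at_right 0))
                 \<and> bminus (g k) x = bplus (g (k + 1)) x) \<and>
       (\<forall>x>0. bplus (g 0) x = of_real (x powr c) * f x) \<and>
       \<comment> \<open>(ii)\<close>
       (\<forall>k. \<forall>x>0. \<forall>\<rho>>0. ball (complex_of_real x) \<rho> \<subseteq> {z. Re z > 0} \<longrightarrow>
                 glued g k analytic_on ball (complex_of_real x) \<rho>) \<and>
       \<comment> \<open>(iii)\<close>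
       (\<exists>C>0. \<forall>k. \<forall>\<theta>\<in>{0..2*pi}. \<forall>r>0.
                 cmod (polar_val g k r \<theta>) \<le> C * exp (T * \<bar>2 * pi * of_int k + \<theta>\<bar>)) \<and>
       \<comment> \<open>(iv)\<close>
       (\<forall>k. uniform_limit {0..2*pi} (\<lambda>r \<theta>. polar_val g k r \<theta>) (\<lambda>_. 0) (at_right 0)
          \<and> uniform_limit {0..2*pi} (\<lambda>r \<theta>. polar_val g k r \<theta>) (\<lambda>_. 0) at_top))"

end

theory Submission
  imports Defs "HOL-Complex_Analysis.Complex_Analysis"
begin

definition eta :: "real \<Rightarrow> nat \<Rightarrow> real" where
  "eta T n = (if even n then 1 else -1) * (real (n div 2) + 1/2) * pi / T"

definition beta :: "real \<Rightarrow> nat \<Rightarrow> real" where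
  "beta T n = 1 / (T * (eta T n)\<^sup>2)"

lemma eta_sq: "(eta T n)\<^sup>2 = ((real (n div 2) + 1/2) * pi / T)\<^sup>2"
  unfolding eta_def by (cases "even n") (simp_all add: power2_eq_square algebra_simps)

lemma beta_eq: "T > 0 \<Longrightarrow> beta T n = 4 * T / pi\<^sup>2 * (1 / (2 * real (n div 2) + 1)\<^sup>2)"
proof -
  assume T: "T > 0"
  define a where "a = real (n div 2) + 1/2"
  have a: "a > 0" unfolding a_def by simp
  have "beta T n = 1 / (T * (a * pi / T)\<^sup>2)" unfolding beta_def eta_sq a_def by simp
  also have "\<dots> = T / (a\<^sup>2 * pi\<^sup>2)" using T a by (simp add: field_simps power2_eq_square)
  also have "2 * real (n div 2) + 1 = 2 * a" unfolding a_def by simp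
  hence "T / (a\<^sup>2 * pi\<^sup>2) = 4 * T / pi\<^sup>2 * (1 / (2 * real (n div 2) + 1)\<^sup>2)"
    using T a by (simp add: field_simps power2_eq_square)
  finally show ?thesis .
qed

lemma isq_sums: "(\<lambda>n. 1 / (real n + 1)\<^sup>2) sums (pi\<^sup>2 / 6)"
  using inverse_squares_sums by (simp add: add.commute)

lemma beta_nonneg: "T > 0 \<Longrightarrow> beta T n \<ge> 0"
  by (simp add: beta_eq)

lemma odd_squares_sums: "(\<lambda>m. 1 / (2 * real m + 1)\<^sup>2) sums (pi\<^sup>2 / 8)"
proof -
  have "(\<lambda>n. sum (\<lambda>n. 1 / (real n + 1)\<^sup>2) {n * 2 ..< n * 2 + 2}) sums (pi\<^sup>2 / 6)"
    using sums_group[OF isq_sums, of 2] by simp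
  moreover have "(\<lambda>n. sum (\<lambda>n. 1 / (real n + 1)\<^sup>2) {n * 2 ..< n * 2 + 2}) = (\<lambda>m. 1 / (2 * real m + 1)\<^sup>2 + 1 / (2 * real m + 2)\<^sup>2)"
  proof
    fix m
    have "{m * 2 ..< m * 2 + 2} = {2*m, Suc (2*m)}" by auto
    thus "sum (\<lambda>n. 1 / (real n + 1)\<^sup>2) {m * 2 ..< m * 2 + 2} = 1 / (2 * real m + 1)\<^sup>2 + 1 / (2 * real m + 2)\<^sup>2"
      by (simp add: add.commute)
  qed
  ultimately have a: "(\<lambda>m. 1 / (2 * real m + 1)\<^sup>2 + 1 / (2 * real m + 2)\<^sup>2) sums (pi\<^sup>2 / 6)"
    by simp
  have "(\<lambda>m. 1/4 * (1 / (real m + 1)\<^sup>2)) sums (1/4 * (pi\<^sup>2 / 6))"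
    by (intro sums_mult isq_sums)
  moreover have "\<And>m. 1/4 * (1 / (real m + 1)\<^sup>2) = 1 / (2 * real m + 2)\<^sup>2"
    by (simp add: field_simps power2_eq_square)
  ultimately have b: "(\<lambda>m. 1 / (2 * real m + 2)\<^sup>2) sums (pi\<^sup>2 / 24)" by simp
  from sums_diff[OF a b] show ?thesis by simp
qed

lemma beta_sums: assumes "T > 0" shows "beta T sums T"
proof -
  have sb: "summable (beta T)"
  proof (rule summable_comparison_test)
    show "summable (\<lambda>n. 16 * T / pi\<^sup>2 * (1 / (real n + 1)\<^sup>2))"
      by (intro summable_mult sums_summable[OF isq_sums])
    show "\<exists>N. \<forall>n\<ge>N. norm (beta T n) \<le> 16 * T / pi\<^sup>2 * (1 / (real n + 1)\<^sup>2)"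
    proof (intro exI allI impI)
      fix n :: nat
      have "n \<le> 2 * (n div 2) + 1" by presburger
      hence "real n \<le> 2 * real (n div 2) + 1" by linarith
      hence h: "real n + 1 \<le> 2 * (2 * real (n div 2) + 1)"
        using of_nat_0_le_iff[of "n div 2", where ?'a=real] by (smt (verit))
      have "1 / (2 * real (n div 2) + 1)\<^sup>2 \<le> 4 * (1 / (real n + 1)\<^sup>2)"
      proof -
        define A where "A = (2 * real (n div 2) + 1)\<^sup>2"
        define B where "B = (real n + 1)\<^sup>2"
        have "B \<le> (2 * (2 * real (n div 2) + 1))\<^sup>2"
          unfolding B_def using h by (intro power_mono) auto
        hence "B \<le> 4 * A" unfolding A_def by (simp add: power2_eq_square algebra_simps)
        moreover have "A > 0" "B > 0" unfolding A_def B_def by auto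
        ultimately have "1 / A \<le> 4 / B" by (simp add: divide_simps)
        thus ?thesis unfolding A_def B_def by simp
      qed
      hence "4 * T / pi\<^sup>2 * (1 / (2 * real (n div 2) + 1)\<^sup>2) \<le> 4 * T / pi\<^sup>2 * (4 * (1 / (real n + 1)\<^sup>2))"
        using assms by (intro mult_left_mono) auto
      thus "norm (beta T n) \<le> 16 * T / pi\<^sup>2 * (1 / (real n + 1)\<^sup>2)"
        using assms by (simp add: beta_eq)
    qed
  qed
  have "(\<lambda>n. sum (beta T) {n * 2 ..< n * 2 + 2}) sums (suminf (beta T))"
    using sums_group[OF summable_sums[OF sb], of 2] by simp
  moreover have "(\<lambda>n. sum (beta T) {n * 2 ..< n * 2 + 2}) = (\<lambda>m. 8 * T / pi\<^sup>2 * (1 / (2 * real m + 1)\<^sup>2))"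
  proof
    fix m
    have "{m * 2 ..< m * 2 + 2} = {2*m, Suc (2*m)}" by auto
    thus "sum (beta T) {m * 2 ..< m * 2 + 2} = 8 * T / pi\<^sup>2 * (1 / (2 * real m + 1)\<^sup>2)"
      using assms by (simp add: beta_eq)
  qed
  moreover have "(\<lambda>m. 8 * T / pi\<^sup>2 * (1 / (2 * real m + 1)\<^sup>2)) sums (8 * T / pi\<^sup>2 * (pi\<^sup>2 / 8))"
    by (intro sums_mult odd_squares_sums)
  ultimately have "suminf (beta T) = T" using sums_unique2 by fastforce
  thus ?thesis using sb summable_sums by fastforce
qed

lemma cos_half_bound: "\<bar>cos (u::real)\<bar> \<ge> 1/2" if "real N * pi - 1 \<le> \<bar>u\<bar>" "\<bar>u\<bar> \<le> real N * pi"
proof -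
  define d where "d = real N * pi - \<bar>u\<bar>"
  have d: "0 \<le> d" "d \<le> 1" using that unfolding d_def by auto
  have "cos \<bar>u\<bar> = cos (real N * pi - d)" unfolding d_def by simp
  also have "\<dots> = (-1)^N * cos d" by (simp add: cos_diff)
  finally have "\<bar>cos u\<bar> = \<bar>cos d\<bar>" by (simp add: abs_mult)
  moreover have "cos d \<ge> cos (pi/3)"
    using d pi_gt3 by (intro cos_monotone_0_pi_le) auto
  ultimately show ?thesis by (simp add: cos_60)
qed

lemma cos_circle_bound:
  fixes w :: complex
  assumes "norm w = real N * pi" "N \<ge> 1"
  shows "exp \<bar>Im w\<bar> / 4 \<le> norm (cos w)"
proof -
  define u where "u = Re w"
  define v where "v = Im w"
  define E where "E = exp \<bar>v\<bar>"
  have E: "E \<ge> 1" unfolding E_def by simp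
  have ee: "exp v + exp (-v) = E + 1/E" "\<bar>exp (-v) - exp v\<bar> = E - 1/E"
  proof -
    have a: "exp v + exp (-v) = E + 1/E \<and> \<bar>exp (-v) - exp v\<bar> = E - 1/E"
    proof (cases "v \<ge> 0")
      case True
      hence "exp (-v) \<le> exp v" by simp
      thus ?thesis using True unfolding E_def by (simp add: exp_minus inverse_eq_divide)
    next
      case False
      hence "exp (-v) \<ge> exp v" by simp
      thus ?thesis using False unfolding E_def by (simp add: exp_minus inverse_eq_divide)
    qed
    thus "exp v + exp (-v) = E + 1/E" "\<bar>exp (-v) - exp v\<bar> = E - 1/E" by auto
  qed
  have re: "\<bar>Re (cos w)\<bar> = \<bar>cos u\<bar> * (E + 1/E) / 2"
    unfolding Re_cos u_def v_def[symmetric] ee(1)[symmetric] using E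
    by (simp add: abs_mult)
  have im: "\<bar>Im (cos w)\<bar> = \<bar>sin u\<bar> * (E - 1/E) / 2"
    unfolding Im_cos u_def v_def[symmetric] ee(2)[symmetric]
    by (simp add: abs_mult)
  have nsq: "(norm (cos w))\<^sup>2 = (Re (cos w))\<^sup>2 + (Im (cos w))\<^sup>2" by (rule cmod_power2)
  show ?thesis
  proof (cases "\<bar>v\<bar> \<ge> 1")
    case True
    have "E \<ge> exp 1" unfolding E_def using True by simp
    moreover have "exp (1::real) \<ge> 2" using exp_ge_add_one_self[of 1] by simp
    ultimately have "E \<ge> 2" by simp
    hence "E * E \<ge> 2 * 1" using E by (intro mult_mono) auto
    hence E2: "E * E \<ge> 2" by simp
    have s: "E - 1/E \<ge> E / 2"
    proof -
      have "1/E \<le> E/2" using E2 E by (simp add: field_simps)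
      thus ?thesis by simp
    qed
    have "(\<bar>Re (cos w)\<bar>)\<^sup>2 \<ge> (cos u)\<^sup>2 * ((E - 1/E)/2)\<^sup>2"
    proof -
      have "1/E \<le> 1" "1/E \<ge> 0" using E by auto
      have le: "1/E \<le> E" by (rule order_trans[OF \<open>1/E \<le> 1\<close> E])
      have "(E - 1/E)/2 \<le> (E + 1/E)/2" using \<open>1/E \<ge> 0\<close> by (intro divide_right_mono) auto
      moreover have "0 \<le> (E - 1/E)/2" using le by simp
      ultimately have "((E - 1/E)/2)\<^sup>2 \<le> ((E + 1/E)/2)\<^sup>2" by (intro power_mono) auto
      hence "(cos u)\<^sup>2 * ((E - 1/E)/2)\<^sup>2 \<le> (cos u)\<^sup>2 * ((E + 1/E)/2)\<^sup>2"
        by (intro mult_left_mono) auto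
      moreover have "(\<bar>cos u\<bar> * (E + 1/E) / 2)\<^sup>2 = (cos u)\<^sup>2 * ((E + 1/E)/2)\<^sup>2"
        by (simp only: times_divide_eq_right[symmetric] power_mult_distrib power2_abs)
      ultimately show ?thesis unfolding re by simp
    qed
    moreover have "(\<bar>Im (cos w)\<bar>)\<^sup>2 = (sin u)\<^sup>2 * ((E - 1/E)/2)\<^sup>2"
      unfolding im by (simp only: times_divide_eq_right[symmetric] power_mult_distrib power2_abs)
    ultimately have "(norm (cos w))\<^sup>2 \<ge> ((cos u)\<^sup>2 + (sin u)\<^sup>2) * ((E - 1/E)/2)\<^sup>2"
      unfolding nsq distrib_right power2_abs by linarith
    hence "(norm (cos w))\<^sup>2 \<ge> ((E - 1/E)/2)\<^sup>2" by simp
    hence "norm (cos w) \<ge> (E - 1/E)/2"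
      by (rule power2_le_imp_le) simp
    hence "E/4 \<le> norm (cos w)" using s by argo
    thus ?thesis unfolding E_def v_def .
  next
    case False
    have "u\<^sup>2 + v\<^sup>2 = (real N * pi)\<^sup>2"
      using assms(1) cmod_power2[of w] unfolding u_def v_def by simp
    moreover have "v\<^sup>2 \<le> 1" using False by (simp add: abs_square_le_1)
    moreover have "v\<^sup>2 \<ge> 0" by simp
    ultimately have "u\<^sup>2 \<ge> (real N * pi)\<^sup>2 - 1" "u\<^sup>2 \<le> (real N * pi)\<^sup>2"
      by linarith+
    have Np: "real N * pi \<ge> 1"
    proof -
      have "real N \<ge> 1" using assms(2) by simp
      moreover have "pi \<ge> 1" using pi_gt3 by simp
      ultimately show ?thesis using mult_mono[of 1 "real N" 1 pi] by simp
    qed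
    have "(real N * pi - 1)\<^sup>2 \<le> (real N * pi)\<^sup>2 - 1"
      using Np by (simp add: power2_eq_square algebra_simps)
    hence "(real N * pi - 1)\<^sup>2 \<le> \<bar>u\<bar>\<^sup>2" using \<open>u\<^sup>2 \<ge> _\<close> unfolding power2_abs by linarith
    hence l: "real N * pi - 1 \<le> \<bar>u\<bar>"
      by (rule power2_le_imp_le) simp
    have "\<bar>u\<bar>\<^sup>2 \<le> (real N * pi)\<^sup>2" using \<open>u\<^sup>2 \<le> _\<close> unfolding power2_abs .
    hence r: "\<bar>u\<bar> \<le> real N * pi"
      by (rule power2_le_imp_le) simp
    have c: "\<bar>cos u\<bar> \<ge> 1/2" using cos_half_bound[OF l r] .
    have "norm (cos w) \<ge> \<bar>Re (cos w)\<bar>" by (rule abs_Re_le_cmod)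
    moreover have "\<bar>Re (cos w)\<bar> \<ge> 1/2 * (E + 1/E) / 2"
      unfolding re using c E by (intro divide_right_mono mult_right_mono) auto
    moreover have "1/E \<ge> 0" using E by simp
    hence "1/2 * (E + 1/E) / 2 \<ge> E / 4" by argo
    ultimately have "E / 4 \<le> norm (cos w)" by argo
    thus ?thesis unfolding E_def v_def .
  qed
qed

definition kidx :: "nat \<Rightarrow> int" where
  "kidx n = (if even n then int (n div 2) else - int (n div 2) - 1)"

lemma eta_kidx: "eta T n = (of_int (kidx n) + 1/2) * pi / T"
  unfolding eta_def kidx_def by (auto simp: field_simps)

lemma kidx_surj: "\<exists>n. kidx n = k \<and> (\<forall>N::nat. -int N \<le> k \<and> k < int N \<longrightarrow> n < 2 * N)"
proof (cases "k \<ge> 0")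
  case True
  show ?thesis
    by (rule exI[of _ "2 * nat k"]) (use True in \<open>auto simp: kidx_def\<close>)
next
  case False
  show ?thesis
    by (rule exI[of _ "2 * nat (-k-1) + 1"]) (use False in \<open>auto simp: kidx_def\<close>)
qed

lemma kidx_inj: "kidx m = kidx n \<Longrightarrow> m = n"
  unfolding kidx_def by (auto split: if_splits) presburger+

lemma kidx_bound: "n < 2 * N \<Longrightarrow> - int N \<le> kidx n \<and> kidx n < int N"
  unfolding kidx_def by auto

lemma abs_eta: "T > 0 \<Longrightarrow> \<bar>eta T n\<bar> = (real (n div 2) + 1/2) * pi / T"
  unfolding eta_def by (auto simp: abs_mult)

lemma eta_nonzero: "T > 0 \<Longrightarrow> eta T n \<noteq> 0"
  using abs_eta[of T n] by auto

lemma cos_zero_eta: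
  assumes T: "T > 0" and c: "cos (complex_of_real T * w) = 0"
  shows "\<exists>n. w = complex_of_real (eta T n)"
proof -
  from c obtain k :: int where k: "complex_of_real T * w = complex_of_real (k * pi) + of_real pi / 2"
    unfolding cos_eq_0 by blast
  obtain n where n: "kidx n = k" using kidx_surj by blast
  have "w = complex_of_real ((k * pi + pi/2) / T)"
    using k T by (simp add: field_simps)
  also have "(k * pi + pi/2) / T = eta T n" unfolding eta_kidx n by (simp add: field_simps)
  finally show ?thesis by blast
qed

lemma eta_sep:
  assumes T: "T > 0" and "m \<noteq> n"
  shows "\<bar>eta T m - eta T n\<bar> \<ge> pi / T"
proof -
  have "kidx m \<noteq> kidx n" using assms kidx_inj by blast
  hence "\<bar>real_of_int (kidx m - kidx n)\<bar> \<ge> 1" by linarith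
  moreover have "eta T m - eta T n = real_of_int (kidx m - kidx n) * pi / T"
    unfolding eta_kidx using T by (simp add: field_simps)
  ultimately show ?thesis using T
    by (simp add: abs_mult abs_divide divide_right_mono)
qed

lemma abs_eta_ge: "T > 0 \<Longrightarrow> \<bar>eta T n\<bar> \<ge> pi / (2 * T)"
  using abs_eta[of T n] by (simp add: field_simps)

lemma cos_eta_zero: "cos (complex_of_real T * complex_of_real (eta T n)) = 0" if "T > 0"
proof -
  have "complex_of_real T * complex_of_real (eta T n) = complex_of_real (real_of_int (kidx n) * pi) + of_real pi / 2"
    unfolding eta_kidx using that by (simp add: field_simps)
  thus ?thesis unfolding cos_eq_0 by blast
qed

lemma res_eta:
  assumes T: "T > 0" and holo: "F holomorphic_on UNIV"
  shows "residue (\<lambda>w. F (of_real s + w) / cos (of_real T * w) / w ^ Suc 1) (complex_of_real (eta T n))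
         = F (of_real s + of_real (eta T n)) / (of_real (eta T n))^2 / (- of_real T * sin (of_real T * of_real (eta T n)))"
proof -
  define p where "p = complex_of_real (eta T n)"
  define \<delta> where "\<delta> = pi / (2 * T)"
  have \<delta>: "\<delta> > 0" unfolding \<delta>_def using T by simp
  have p0: "p \<noteq> 0" unfolding p_def using eta_nonzero[OF T] by simp
  have cp: "cos (of_real T * p) = 0" unfolding p_def using cos_eta_zero[OF T] .
  have sp: "sin (of_real T * p) \<noteq> 0"
  proof
    assume "sin (of_real T * p) = 0"
    hence "(sin (of_real T * p))\<^sup>2 + (cos (of_real T * p))\<^sup>2 = 0" using cp by simp
    thus False by simp
  qed
  have nz: "w \<noteq> 0 \<and> cos (of_real T * w) \<noteq> 0" if w: "w \<in> ball p \<delta> - {p}" for w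
  proof
    have d: "norm (w - p) < \<delta>" using w by (simp add: dist_norm norm_minus_commute)
    show "w \<noteq> 0"
    proof
      assume "w = 0"
      hence "norm p < \<delta>" using d by simp
      moreover have "norm p \<ge> \<delta>" unfolding p_def \<delta>_def using abs_eta_ge[OF T, of n] by simp
      ultimately show False by simp
    qed
    show "cos (of_real T * w) \<noteq> 0"
    proof
      assume "cos (of_real T * w) = 0"
      then obtain m where m: "w = complex_of_real (eta T m)" using cos_zero_eta[OF T] by blast
      have "m \<noteq> n" using m w unfolding p_def by auto
      hence "\<bar>eta T m - eta T n\<bar> \<ge> pi / T" using eta_sep[OF T] by blast
      moreover have "norm (w - p) = \<bar>eta T m - eta T n\<bar>" unfolding m p_def
        by (simp flip: of_real_diff)
      moreover have "\<delta> < pi / T" unfolding \<delta>_def using T by (simp add: field_simps)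
      ultimately show False using d by simp
    qed
  qed
  define c where "c = F (of_real s + p) / p^2 / (- of_real T * sin (of_real T * p))"
  have "residue (\<lambda>w. F (of_real s + w) / cos (of_real T * w) / w ^ Suc 1) p = c"
  proof (rule residue_simple'[of "ball p \<delta>"])
    show "open (ball p \<delta>)" "p \<in> ball p \<delta>" using \<delta> by auto
    show "(\<lambda>w. F (of_real s + w) / cos (of_real T * w) / w ^ Suc 1) holomorphic_on ball p \<delta> - {p}"
      using nz by (intro holomorphic_intros holomorphic_on_compose_gen[OF _ holo, unfolded o_def]) auto
    have D: "((\<lambda>w. cos (of_real T * w)) has_field_derivative (- of_real T * sin (of_real T * p))) (at p)"
      by (auto intro!: derivative_eq_intros)
    hence L1: "((\<lambda>w. (cos (of_real T * w) - cos (of_real T * p)) / (w - p)) \<longlongrightarrow> (- of_real T * sin (of_real T * p))) (at p)"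
      unfolding has_field_derivative_iff .
    have L2: "((\<lambda>w. inverse ((cos (of_real T * w) - cos (of_real T * p)) / (w - p))) \<longlongrightarrow> inverse (- of_real T * sin (of_real T * p))) (at p)"
      using T sp by (intro tendsto_inverse L1) auto
    have cF: "continuous_on UNIV F" using holo holomorphic_on_imp_continuous_on by blast
    have L3: "((\<lambda>w. F (of_real s + w) / w^2) \<longlongrightarrow> F (of_real s + p) / p^2) (at p)"
    proof -
      have cF': "isCont F z" for z using cF by (simp add: continuous_on_eq_continuous_at)
      have "isCont (\<lambda>w. F (of_real s + w)) p" by (rule isCont_o2[OF _ cF']) auto
      hence "(\<lambda>w. F (of_real s + w)) \<midarrow>p\<rightarrow> F (of_real s + p)" by (rule isContD)
      thus ?thesis using p0 by (intro tendsto_intros) auto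
    qed
    have L4: "((\<lambda>w. F (of_real s + w) / w^2 * inverse ((cos (of_real T * w) - cos (of_real T * p)) / (w - p))) \<longlongrightarrow> c) (at p)"
      unfolding c_def using tendsto_mult[OF L3 L2] by (simp add: divide_inverse)
    show "((\<lambda>w. F (of_real s + w) / cos (of_real T * w) / w ^ Suc 1 * (w - p)) \<longlongrightarrow> c) (at p)"
      using L4 unfolding cp by (simp add: field_simps power2_eq_square)
  qed
  thus ?thesis unfolding c_def p_def .
qed

lemma eta_inj: "T > 0 \<Longrightarrow> inj (eta T)"
proof (rule injI)
  fix m n assume T: "T > 0" and e: "eta T m = eta T n"
  show "m = n"
  proof (rule ccontr)
    assume "m \<noteq> n"
    hence "\<bar>eta T m - eta T n\<bar> \<ge> pi / T" using eta_sep[OF T] by blast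
    moreover have "pi / T > 0" using T by simp
    ultimately show False using e by simp
  qed
qed

lemma norm_res_eta:
  fixes F :: "complex \<Rightarrow> complex"
  assumes T: "T > 0"
  shows "norm (F (of_real s + of_real (eta T n)) / (of_real (eta T n))^2 / (- of_real T * sin (of_real T * of_real (eta T n)) :: complex))
         = beta T n * norm (F (of_real (s + eta T n)))"
proof -
  define p where "p = complex_of_real (eta T n)"
  have cp: "cos (of_real T * p) = 0" unfolding p_def using cos_eta_zero[OF T] .
  have "(sin (of_real T * p))\<^sup>2 = 1" using sin_squared_eq[of "of_real T * p"] cp by simp
  hence "(norm (sin (of_real T * p)))\<^sup>2 = 1" by (metis norm_one norm_power)
  hence ns: "norm (sin (of_real T * p)) = 1"
    using norm_ge_zero[of "sin (of_real T * p)"] by (auto simp add: power2_eq_1_iff)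
  have "norm (F (of_real s + p) / p^2 / (- of_real T * sin (of_real T * p)))
        = norm (F (of_real s + p)) / (eta T n)\<^sup>2 / T"
    using T ns unfolding p_def by (simp add: norm_divide norm_mult norm_power)
  also have "\<dots> = beta T n * norm (F (of_real (s + eta T n)))"
    unfolding beta_def p_def by simp
  finally show ?thesis unfolding p_def .
qed

lemma boas_N:
  fixes F :: "complex \<Rightarrow> complex"
  assumes T: "T > 0" and holo: "F holomorphic_on UNIV"
    and bd: "\<And>z. norm (F z) \<le> M * exp (T * \<bar>Im z\<bar>)" and N: "N \<ge> 1"
  shows "norm (deriv F (of_real s)) \<le> (\<Sum>n<2*N. beta T n * norm (F (of_real (s + eta T n)))) + 4 * M / (real N * pi / T)"
proof -
  define r where "r = real N * pi / T"
  have r: "r > 0" unfolding r_def using T N by simp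
  define A where "A = ball (0::complex) (r + pi / (4 * T))"
  define \<phi> where "\<phi> = (\<lambda>w. F (of_real s + w) / cos (of_real T * w))"
  define S where "S = (\<lambda>n. complex_of_real (eta T n)) ` {..<2*N}"
  have M: "M \<ge> 0" using bd[of 0] by (smt (verit) norm_ge_zero exp_gt_zero mult_nonneg_nonneg zero_le_mult_iff)
  have holoc: "F holomorphic_on X" for X using holo by (rule holomorphic_on_subset) auto
  have key: "cmod ((deriv ^^ 1) \<phi> 0 / fact 1 + sum (residue (\<lambda>w. \<phi> w / w ^ Suc 1)) S) \<le> (4 * M) / r ^ 1"
  proof (rule fps_coeff_residues_bound[where k = "{}"])
    show "open A" "connected A" unfolding A_def by auto
    have "pi / (4 * T) > 0" using T by simp
    thus "cball 0 r \<subseteq> A" unfolding A_def by auto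
    show "0 < r" by fact
    show "finite S" "finite {}" unfolding S_def by auto
    show "0 \<le> 4 * M" using M by simp
    have etab: "\<bar>eta T n\<bar> < r" if "n < 2 * N" for n
    proof -
      have "n div 2 < N" using that by auto
      hence "real (n div 2) + 1/2 < real N" by linarith
      hence "(real (n div 2) + 1/2) * pi / T < real N * pi / T"
        using T by (intro divide_strict_right_mono mult_strict_right_mono) auto
      thus ?thesis unfolding abs_eta[OF T] r_def .
    qed
    show "S \<subseteq> ball 0 r" unfolding S_def using etab by auto
    show "0 \<notin> S" unfolding S_def using eta_nonzero[OF T] by auto
    show "\<phi> holomorphic_on A - S"
      unfolding \<phi>_def
    proof (intro holomorphic_intros holomorphic_on_compose_gen[OF _ holo, unfolded o_def])
      fix w assume w: "w \<in> A - S"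
      show "cos (of_real T * w) \<noteq> 0"
      proof
        assume "cos (of_real T * w) = 0"
        then obtain m where m: "w = complex_of_real (eta T m)" using cos_zero_eta[OF T] by blast
        have "\<bar>eta T m\<bar> < r + pi / (4 * T)" using w unfolding A_def m by simp
        hence "(real (m div 2) + 1/2) * pi / T < (real N + 1/4) * pi / T"
          unfolding abs_eta[OF T] r_def using T by (simp add: field_simps)
        hence "real (m div 2) + 1/2 < real N + 1/4"
          using T by (simp add: divide_less_cancel)
        hence "m div 2 < N" by linarith
        hence "m < 2 * N" by linarith
        hence "w \<in> S" unfolding S_def m by auto
        thus False using w by simp
      qed
    qed auto
    fix z :: complex assume z: "cmod z = r"
    have nT: "norm (of_real T * z) = real N * pi" using z T unfolding r_def by (simp add: norm_mult)
    have cb: "exp \<bar>Im (of_real T * z)\<bar> / 4 \<le> norm (cos (of_real T * z))"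
      by (rule cos_circle_bound[OF nT N])
    have imT: "\<bar>Im (of_real T * z)\<bar> = T * \<bar>Im z\<bar>" using T by (simp add: abs_mult)
    have pos: "exp (T * \<bar>Im z\<bar>) / 4 > 0" by simp
    have "norm (F (of_real s + z)) \<le> M * exp (T * \<bar>Im z\<bar>)" using bd[of "of_real s + z"] by simp
    hence "norm (\<phi> z) \<le> M * exp (T * \<bar>Im z\<bar>) / (exp (T * \<bar>Im z\<bar>) / 4)"
      unfolding \<phi>_def norm_divide using cb imT pos M
      by (intro frac_le) auto
    also have "\<dots> = 4 * M" by simp
    finally show "cmod (\<phi> z) \<le> 4 * M" .
  qed
  have d\<phi>: "deriv \<phi> 0 = deriv F (of_real s)"
  proof -
    have dF: "(F has_field_derivative deriv F (of_real s)) (at (of_real s))"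
      using holo by (simp add: DERIV_deriv_iff_field_differentiable holomorphic_on_imp_differentiable_at)
    have d1: "((\<lambda>w. F (of_real s + w)) has_field_derivative deriv F (of_real s) * 1) (at 0)"
      by (rule DERIV_chain2[where f=F and g="\<lambda>w. of_real s + w"]) (use dF in simp, auto intro!: derivative_eq_intros)
    have d2: "((\<lambda>w. cos (of_real T * w)) has_field_derivative - sin (of_real T * 0) * of_real T) (at 0)"
      by (auto intro!: derivative_eq_intros)
    have "(\<phi> has_field_derivative (deriv F (of_real s) * 1 * cos (of_real T * 0) - F (of_real s + 0) * (- sin (of_real T * 0) * of_real T)) / (cos (of_real T * 0) * cos (of_real T * 0))) (at 0)"
      unfolding \<phi>_def by (rule DERIV_divide[OF d1 d2]) simp
    hence "(\<phi> has_field_derivative deriv F (of_real s)) (at 0)" by simp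
    thus ?thesis by (rule DERIV_imp_deriv)
  qed
  have sumS: "sum (residue (\<lambda>w. \<phi> w / w ^ Suc 1)) S
      = (\<Sum>n<2*N. F (of_real s + of_real (eta T n)) / (of_real (eta T n))^2 / (- of_real T * sin (of_real T * of_real (eta T n))))"
  proof -
    have inj: "inj_on (\<lambda>n. complex_of_real (eta T n)) {..<2 * N}"
      using eta_inj[OF T] by (auto simp: inj_on_def inj_def)
    show ?thesis unfolding S_def \<phi>_def
      by (subst sum.reindex[OF inj]) (simp only: o_def res_eta[OF T holo])
  qed
  have "norm (deriv F (of_real s)) \<le> norm (sum (residue (\<lambda>w. \<phi> w / w ^ Suc 1)) S) + 4 * M / r"
    using key d\<phi> norm_triangle_ineq4[of "deriv F (of_real s) + sum (residue (\<lambda>w. \<phi> w / w ^ Suc 1)) S" "sum (residue (\<lambda>w. \<phi> w / w ^ Suc 1)) S"]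
    by simp
  also have "norm (sum (residue (\<lambda>w. \<phi> w / w ^ Suc 1)) S) \<le> (\<Sum>n<2*N. beta T n * norm (F (of_real (s + eta T n))))"
    unfolding sumS by (rule order_trans[OF norm_sum], unfold norm_res_eta[OF T], simp)
  finally show ?thesis unfolding r_def by simp
qed

lemma boas:
  fixes F :: "complex \<Rightarrow> complex"
  assumes T: "T > 0" and holo: "F holomorphic_on UNIV"
    and bd: "\<And>z. norm (F z) \<le> M * exp (T * \<bar>Im z\<bar>)"
  shows "summable (\<lambda>n. beta T n * norm (F (of_real (s + eta T n))))"
    and "norm (deriv F (of_real s)) \<le> (\<Sum>n. beta T n * norm (F (of_real (s + eta T n))))"
proof -
  have bM: "norm (F (of_real x)) \<le> M" for x using bd[of "of_real x"] by simp
  show sm: "summable (\<lambda>n. beta T n * norm (F (of_real (s + eta T n))))"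
  proof (rule summable_comparison_test)
    show "summable (\<lambda>n. M * beta T n)"
      using sums_summable[OF beta_sums[OF T]] by (rule summable_mult)
    show "\<exists>N. \<forall>n\<ge>N. norm (beta T n * norm (F (of_real (s + eta T n)))) \<le> M * beta T n"
    proof (intro exI allI impI)
      fix n :: nat
      have "beta T n * norm (F (of_real (s + eta T n))) \<le> beta T n * M"
        using beta_nonneg[OF T, of n] bM[of "s + eta T n"] by (rule mult_left_mono[rotated])
      thus "norm (beta T n * norm (F (of_real (s + eta T n)))) \<le> M * beta T n"
        using beta_nonneg[OF T, of n] by (simp add: abs_mult mult.commute)
    qed
  qed
  define S where "S = (\<Sum>n. beta T n * norm (F (of_real (s + eta T n))))"
  have le: "norm (deriv F (of_real s)) \<le> S + (4 * M * T / pi) / real N" if "N \<ge> 1" for N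
  proof -
    have "norm (deriv F (of_real s)) \<le> (\<Sum>n<2*N. beta T n * norm (F (of_real (s + eta T n)))) + 4 * M / (real N * pi / T)"
      by (rule boas_N[OF T holo bd that])
    also have "(\<Sum>n<2*N. beta T n * norm (F (of_real (s + eta T n)))) \<le> S"
      unfolding S_def using sm beta_nonneg[OF T] by (intro sum_le_suminf) auto
    also have "4 * M / (real N * pi / T) = (4 * M * T / pi) / real N" by (simp add: field_simps)
    finally show ?thesis by simp
  qed
  have "(\<lambda>N. S + (4 * M * T / pi) / real N) \<longlonglongrightarrow> S + 0"
    by (intro tendsto_intros)
  hence "norm (deriv F (of_real s)) \<le> S + 0"
    by (rule LIMSEQ_le_const) (use le in auto)
  thus "norm (deriv F (of_real s)) \<le> S" by simp
qed

lemma dilation_nn: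
  fixes \<psi> :: "real \<Rightarrow> real"
  assumes [measurable]: "\<psi> \<in> borel_measurable borel" and a: "a > 0"
  shows "(\<integral>\<^sup>+x. ennreal (indicator {0<..} x * (\<psi> (x * a))\<^sup>2 / x) \<partial>lborel)
       = (\<integral>\<^sup>+x. ennreal (indicator {0<..} x * (\<psi> x)\<^sup>2 / x) \<partial>lborel)"
proof -
  let ?f = "\<lambda>y. ennreal (indicator {0<..} y * (\<psi> y)\<^sup>2 / y)"
  have "(\<integral>\<^sup>+x. ?f x \<partial>lborel) = \<bar>a\<bar> * (\<integral>\<^sup>+x. ?f (0 + a * x) \<partial>lborel)"
    using a by (intro nn_integral_real_affine) auto
  also have "\<dots> = (\<integral>\<^sup>+x. ennreal a * ?f (a * x) \<partial>lborel)"
    using a by (subst nn_integral_cmult) auto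
  also have "\<dots> = (\<integral>\<^sup>+x. ennreal (indicator {0<..} x * (\<psi> (x * a))\<^sup>2 / x) \<partial>lborel)"
  proof (intro nn_integral_cong)
    fix x :: real
    show "ennreal a * ?f (a * x) = ennreal (indicator {0<..} x * (\<psi> (x * a))\<^sup>2 / x)"
    proof (cases "x > 0")
      case True
      hence "a * x > 0" using a by simp
      hence "ennreal a * ?f (a * x) = ennreal (a * ((\<psi> (a * x))\<^sup>2 / (a * x)))"
        using a True by (subst ennreal_mult) auto
      also have "a * ((\<psi> (a * x))\<^sup>2 / (a * x)) = indicator {0<..} x * (\<psi> (x * a))\<^sup>2 / x"
        using a True by (simp add: mult.commute)
      finally show ?thesis .
    next
      case False
      hence "\<not> (a * x > 0)" using a by (simp add: zero_less_mult_iff)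
      thus ?thesis using False by simp
    qed
  qed
  finally show ?thesis ..
qed

lemma prod_le_avg: "(a::real) * b \<le> (a\<^sup>2 + b\<^sup>2) / 2"
  using sum_squares_bound[of a b] by (simp add: power2_eq_square field_simps)

lemma L2_lemma:
  fixes \<psi> \<psi>1 :: "real \<Rightarrow> real" and \<beta> \<eta> :: "nat \<Rightarrow> real"
  assumes [measurable]: "\<psi> \<in> borel_measurable borel" "\<psi>1 \<in> borel_measurable borel"
    and nn: "\<And>x. \<psi> x \<ge> 0" "\<And>x. \<psi>1 x \<ge> 0" and bnn: "\<And>n. \<beta> n \<ge> 0"
    and sm: "\<And>x. x > 0 \<Longrightarrow> summable (\<lambda>n. \<beta> n * \<psi> (x * exp (\<eta> n)))"
    and le: "\<And>x. x > 0 \<Longrightarrow> \<psi>1 x \<le> (\<Sum>n. \<beta> n * \<psi> (x * exp (\<eta> n)))"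
    and bs: "\<beta> sums B"
  shows "(\<integral>\<^sup>+x. ennreal (indicator {0<..} x * (\<psi>1 x)\<^sup>2 / x) \<partial>lborel)
         \<le> ennreal (B\<^sup>2) * (\<integral>\<^sup>+x. ennreal (indicator {0<..} x * (\<psi> x)\<^sup>2 / x) \<partial>lborel)"
proof -
  define I where "I = (\<integral>\<^sup>+x. ennreal (indicator {0<..} x * (\<psi> x)\<^sup>2 / x) \<partial>lborel)"
  define q where "q = (\<lambda>n x. ennreal (indicator {0<..} x * (\<psi> (x * exp (\<eta> n)))\<^sup>2 / x))"
  have q_meas[measurable]: "q n \<in> borel_measurable lborel" for n unfolding q_def by measurable
  have qI: "(\<integral>\<^sup>+x. q n x \<partial>lborel) = I" for n
    unfolding q_def I_def by (rule dilation_nn) auto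
  define H where "H = (\<lambda>x. \<Sum>n. \<Sum>m. ennreal (\<beta> n * \<beta> m / 2) * (q n x + q m x))"
  have pw: "ennreal (indicator {0<..} x * (\<psi>1 x)\<^sup>2 / x) \<le> H x" for x
  proof (cases "x > 0")
    case False thus ?thesis by simp
  next
    case True
    define a where "a = (\<lambda>n. \<beta> n * \<psi> (x * exp (\<eta> n)))"
    have a0: "a n \<ge> 0" for n unfolding a_def using bnn nn by simp
    define S where "S = (\<Sum>n. a n)"
    have smx: "summable a" unfolding a_def using sm[OF True] .
    have "\<psi>1 x \<le> S" unfolding S_def a_def using le[OF True] .
    hence "(\<psi>1 x)\<^sup>2 \<le> S\<^sup>2" using nn by (intro power_mono) auto
    hence "ennreal (indicator {0<..} x * (\<psi>1 x)\<^sup>2 / x) \<le> ennreal (S * S * (1 / x))"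
      using True by (intro ennreal_leI) (simp add: power2_eq_square divide_right_mono)
    also have "\<dots> = ennreal S * ennreal S * ennreal (1 / x)"
    proof -
      have S0: "S \<ge> 0" unfolding S_def using suminf_nonneg[OF smx a0] .
      have "ennreal (S * S * (1 / x)) = ennreal (S * S) * ennreal (1 / x)"
        by (rule ennreal_mult) (use S0 True in auto)
      also have "ennreal (S * S) = ennreal S * ennreal S" by (rule ennreal_mult) (use S0 in auto)
      finally show ?thesis .
    qed
    also have "ennreal S = (\<Sum>n. ennreal (a n))"
      unfolding S_def using suminf_ennreal2[OF a0 smx] by simp
    also have "(\<Sum>n. ennreal (a n)) * (\<Sum>n. ennreal (a n)) * ennreal (1 / x)
             = (\<Sum>n. \<Sum>m. ennreal (a n) * ennreal (a m) * ennreal (1 / x))"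
      by (simp add: mult.assoc)
    also have "\<dots> \<le> H x"
      unfolding H_def
    proof (intro suminf_le summableI allI)
      fix n m
      have "a n * a m = \<beta> n * \<beta> m * (\<psi> (x * exp (\<eta> n)) * \<psi> (x * exp (\<eta> m)))"
        unfolding a_def by simp
      also have "\<dots> \<le> \<beta> n * \<beta> m * (((\<psi> (x * exp (\<eta> n)))\<^sup>2 + (\<psi> (x * exp (\<eta> m)))\<^sup>2) / 2)"
        using bnn by (intro mult_left_mono prod_le_avg) auto
      finally have "a n * a m * (1 / x) \<le> \<beta> n * \<beta> m / 2 * ((\<psi> (x * exp (\<eta> n)))\<^sup>2 / x + (\<psi> (x * exp (\<eta> m)))\<^sup>2 / x)"
        using True by (simp add: field_simps divide_right_mono)
      hence "ennreal (a n * a m * (1 / x)) \<le> ennreal (\<beta> n * \<beta> m / 2 * ((\<psi> (x * exp (\<eta> n)))\<^sup>2 / x + (\<psi> (x * exp (\<eta> m)))\<^sup>2 / x))"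
        by (rule ennreal_leI)
      also have "\<dots> = ennreal (\<beta> n * \<beta> m / 2) * ennreal ((\<psi> (x * exp (\<eta> n)))\<^sup>2 / x + (\<psi> (x * exp (\<eta> m)))\<^sup>2 / x)"
        by (rule ennreal_mult) (use bnn True in auto)
      also have "ennreal ((\<psi> (x * exp (\<eta> n)))\<^sup>2 / x + (\<psi> (x * exp (\<eta> m)))\<^sup>2 / x) = q n x + q m x"
        unfolding q_def using True by (subst ennreal_plus) auto
      finally have X: "ennreal (a n * a m * (1 / x)) \<le> ennreal (\<beta> n * \<beta> m / 2) * (q n x + q m x)" .
      have "ennreal (a n * a m * (1/x)) = ennreal (a n * a m) * ennreal (1/x)"
        by (rule ennreal_mult) (use a0 True in auto)
      also have "ennreal (a n * a m) = ennreal (a n) * ennreal (a m)" by (rule ennreal_mult) (use a0 in auto)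
      finally show "ennreal (a n) * ennreal (a m) * ennreal (1 / x) \<le> ennreal (\<beta> n * \<beta> m / 2) * (q n x + q m x)"
        using X by simp
    qed
    finally show ?thesis .
  qed
  have "(\<integral>\<^sup>+x. ennreal (indicator {0<..} x * (\<psi>1 x)\<^sup>2 / x) \<partial>lborel) \<le> (\<integral>\<^sup>+x. H x \<partial>lborel)"
    by (intro nn_integral_mono pw)
  also have "(\<integral>\<^sup>+x. H x \<partial>lborel) = (\<Sum>n. \<Sum>m. ennreal (\<beta> n * \<beta> m / 2) * (I + I))"
    unfolding H_def
    by (simp add: nn_integral_suminf nn_integral_cmult nn_integral_add qI)
  also have "\<dots> = (\<Sum>n. \<Sum>m. ennreal (\<beta> n) * ennreal (\<beta> m) * I)"
  proof -
    have "ennreal (\<beta> n * \<beta> m / 2) * (I + I) = ennreal (\<beta> n) * ennreal (\<beta> m) * I" for n m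
    proof -
      have "ennreal (\<beta> n * \<beta> m / 2) * (I + I) = ennreal (\<beta> n * \<beta> m / 2) * ennreal 2 * I"
        by (simp add: mult_2[symmetric] mult.assoc)
      also have "ennreal (\<beta> n * \<beta> m / 2) * ennreal 2 = ennreal (\<beta> n * \<beta> m / 2 * 2)"
        by (rule ennreal_mult[symmetric]) (use bnn in auto)
      also have "\<beta> n * \<beta> m / 2 * 2 = \<beta> n * \<beta> m" by simp
      finally show ?thesis using bnn by (simp add: ennreal_mult)
    qed
    thus ?thesis by simp
  qed
  also have "\<dots> = (\<Sum>n. ennreal (\<beta> n)) * (\<Sum>m. ennreal (\<beta> m)) * I"
    by (simp add: mult.assoc)
  also have "(\<Sum>n. ennreal (\<beta> n)) = ennreal B"
    using suminf_ennreal2[OF bnn sums_summable[OF bs]] sums_unique[OF bs] by simp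
  also have "ennreal B * ennreal B = ennreal (B\<^sup>2)"
    using sums_le[OF _ sums_zero bs] bnn by (simp add: power2_eq_square ennreal_mult)
  finally show ?thesis unfolding I_def .
qed

lemma floor_2pi: "2 * pi * of_int k \<le> y \<Longrightarrow> y < 2 * pi * of_int k + 2 * pi \<Longrightarrow> \<lfloor>y / (2 * pi)\<rfloor> = k"
  by (rule floor_unique) (auto simp: field_simps)

lemma sin_shift: "sin (t - 2 * pi * of_int k) = sin t" "cos (t - 2 * pi * of_int k) = cos t"
  by (simp_all add: sin_diff cos_diff)

lemma exp_cis_shift: "exp z = complex_of_real (exp (Re z)) * cis (Im z - 2 * pi * of_int k)"
proof -
  have "cis (Im z - 2 * pi * of_int k) = cis (Im z)"
    by (simp add: cis.ctr sin_shift)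
  thus ?thesis by (simp add: exp_eq_polar)
qed

lemma open_slit: "open slit_plane"
proof -
  have "complex_of_real ` {0..} = {z. Im z = 0 \<and> Re z \<ge> 0}"
    by (auto simp: image_iff complex_eq_iff intro!: exI[of _ "Re _"])
  moreover have "closed {z::complex. Im z = 0 \<and> Re z \<ge> 0}"
    by (intro closed_Collect_conj closed_Collect_eq closed_Collect_le continuous_intros)
  ultimately show ?thesis unfolding slit_plane_def by (simp add: open_Diff)
qed

lemma exp_in_slit:
  assumes "0 < Im z - 2 * pi * of_int k" "Im z - 2 * pi * of_int k < 2 * pi"
  shows "exp z \<in> slit_plane"
proof -
  define \<theta> where "\<theta> = Im z - 2 * pi * of_int k"
  have si: "sin (Im z) = sin \<theta>" "cos (Im z) = cos \<theta>" unfolding \<theta>_def by (simp_all add: sin_shift)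
  have "exp z \<notin> complex_of_real ` {0..}"
  proof
    assume "exp z \<in> complex_of_real ` {0..}"
    then obtain t where t: "t \<ge> 0" "exp z = complex_of_real t" by auto
    have "Im (exp z) = 0" using t by simp
    hence s0: "sin \<theta> = 0" using si by (simp add: Im_exp)
    have "Re (exp z) \<ge> 0" using t by simp
    hence c0: "cos \<theta> \<ge> 0" using si by (simp add: Re_exp zero_le_mult_iff)
    have th: "0 < \<theta>" "\<theta> < 2 * pi" using assms unfolding \<theta>_def by auto
    show False
    proof (cases "\<theta> < pi")
      case True thus False using sin_gt_zero[of \<theta>] th s0 by simp
    next
      case False
      show False
      proof (cases "\<theta> = pi")
        case True thus False using c0 by simp
      next
        case False
        hence "0 < \<theta> - pi" "\<theta> - pi < pi" using \<open>\<not> \<theta> < pi\<close> th by auto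
        hence "sin (\<theta> - pi) > 0" by (rule sin_gt_zero)
        thus False using s0 by (simp add: sin_diff)
      qed
    qed
  qed
  thus ?thesis unfolding slit_plane_def by simp
qed

lemma build_G:
  assumes mb: "mellin_bernstein c T f"
  shows "\<exists>G C. G holomorphic_on UNIV \<and> (\<forall>z. norm (G z) \<le> C * exp (T * \<bar>Im z\<bar>))
          \<and> (\<forall>s. G (complex_of_real s) = complex_of_real (exp s powr c) * f (exp s))"
proof -
  from mb[unfolded mellin_bernstein_def] obtain g where
    an: "\<forall>k. g k analytic_on slit_plane" and
    i: "\<forall>k. \<forall>x>0. (\<exists>l. ((\<lambda>e::real. g k (of_real x + \<i> * of_real e)) \<longlongrightarrow> l) (at_right 0))
                 \<and> (\<exists>l. ((\<lambda>e::real. g k (of_real x - \<i> * of_real e)) \<longlongrightarrow> l) (at_right 0))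
                 \<and> bminus (g k) x = bplus (g (k + 1)) x" and
    b0: "\<forall>x>0. bplus (g 0) x = of_real (x powr c) * f x" and
    ii: "\<forall>k. \<forall>x>0. \<forall>\<rho>>0. ball (complex_of_real x) \<rho> \<subseteq> {z. Re z > 0} \<longrightarrow>
                 glued g k analytic_on ball (complex_of_real x) \<rho>" and
    iii: "\<exists>C>0. \<forall>k. \<forall>\<theta>\<in>{0..2*pi}. \<forall>r>0.
                 cmod (polar_val g k r \<theta>) \<le> C * exp (T * \<bar>2 * pi * of_int k + \<theta>\<bar>)"
    by blast
  from iii obtain C where Cb: "\<forall>k. \<forall>\<theta>\<in>{0..2*pi}. \<forall>r>0.
                 cmod (polar_val g k r \<theta>) \<le> C * exp (T * \<bar>2 * pi * of_int k + \<theta>\<bar>)" by blast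
  define kk where "kk = (\<lambda>z::complex. \<lfloor>Im z / (2*pi)\<rfloor>)"
  define th where "th = (\<lambda>z::complex. Im z - 2 * pi * of_int (kk z))"
  define G where "G = (\<lambda>z. polar_val g (kk z) (exp (Re z)) (th z))"
  have thb: "0 \<le> th z" "th z < 2 * pi" for z
  proof -
    have "of_int (kk z) \<le> Im z / (2*pi)" "Im z / (2*pi) < of_int (kk z) + 1"
      unfolding kk_def by linarith+
    thus "0 \<le> th z" "th z < 2 * pi" unfolding th_def by (auto simp: field_simps)
  qed
  have bound: "norm (G z) \<le> C * exp (T * \<bar>Im z\<bar>)" for z
  proof -
    have "2 * pi * of_int (kk z) + th z = Im z" unfolding th_def by simp
    thus ?thesis using Cb thb[of z] unfolding G_def by (metis atLeastAtMost_iff exp_gt_zero less_eq_real_def)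
  qed
  have real: "G (complex_of_real s) = complex_of_real (exp s powr c) * f (exp s)" for s
  proof -
    have "kk (complex_of_real s) = 0" "th (complex_of_real s) = 0" unfolding kk_def th_def by simp_all
    thus ?thesis unfolding G_def polar_val_def using b0 by simp
  qed
  have Geq: "G z = g (kk z) (exp z)" if "th z \<noteq> 0" for z
  proof -
    have "th z \<noteq> 2 * pi" using thb[of z] by simp
    moreover have "exp z = complex_of_real (exp (Re z)) * cis (th z)"
      unfolding th_def by (rule exp_cis_shift)
    ultimately show ?thesis unfolding G_def polar_val_def using that by simp
  qed
  have "G analytic_on UNIV"
    unfolding analytic_on_def
  proof
    fix w :: complex
    define k where "k = kk w"
    show "\<exists>e>0. G holomorphic_on ball w e"
    proof (cases "th w = 0")
      case False
      hence pos: "th w > 0" using thb[of w] by simp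
      define e where "e = min (th w) (2 * pi - th w)"
      have e: "e > 0" unfolding e_def using pos thb[of w] by simp
      have zin: "kk z = k \<and> 0 < th z \<and> th z < 2 * pi" if z: "z \<in> ball w e" for z
      proof -
        have "\<bar>Im z - Im w\<bar> < e"
          using z abs_Im_le_cmod[of "z - w"] by (simp add: dist_norm norm_minus_commute)
        hence "2 * pi * of_int k < Im z" "Im z < 2 * pi * of_int k + 2 * pi"
          unfolding e_def k_def th_def by auto
        moreover from this have "kk z = k" unfolding kk_def by (intro floor_2pi) auto
        ultimately show ?thesis unfolding th_def by auto
      qed
      have "(g k \<circ> exp) holomorphic_on ball w e"
      proof (rule holomorphic_on_compose_gen)
        show "exp holomorphic_on ball w e" by (intro holomorphic_intros)
        show "g k holomorphic_on slit_plane" using an analytic_imp_holomorphic by blast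
        show "exp ` ball w e \<subseteq> slit_plane"
        proof
          fix y assume "y \<in> exp ` ball w e"
          then obtain z where z: "z \<in> ball w e" "y = exp z" by auto
          show "y \<in> slit_plane" unfolding z(2)
            by (rule exp_in_slit[of z k]) (use zin[OF z(1)] in \<open>auto simp: th_def\<close>)
        qed
      qed
      hence "G holomorphic_on ball w e"
      proof (rule holomorphic_transform)
        fix z assume "z \<in> ball w e"
        hence "kk z = k \<and> 0 < th z \<and> th z < 2 * pi" by (rule zin)
        hence "kk z = k" "th z \<noteq> 0" by auto
        thus "(g k \<circ> exp) z = G z" using Geq[of z] by simp
      qed
      thus ?thesis using e by blast
    next
      case True
      hence Imw: "Im w = 2 * pi * of_int k" unfolding th_def k_def by simp
      define x0 where "x0 = exp (Re w)"
      have x0: "x0 > 0" unfolding x0_def by simp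
      have ew: "exp w = complex_of_real x0"
        using exp_cis_shift[of w k] Imw unfolding x0_def by simp
      have hol: "glued g (k - 1) holomorphic_on ball (complex_of_real x0) x0"
      proof -
        have "ball (complex_of_real x0) x0 \<subseteq> {z. Re z > 0}"
        proof
          fix z assume "z \<in> ball (complex_of_real x0) x0"
          hence "\<bar>Re (z - complex_of_real x0)\<bar> < x0"
            using abs_Re_le_cmod[of "z - complex_of_real x0"] by (simp add: dist_norm norm_minus_commute)
          thus "z \<in> {z. Re z > 0}" by auto
        qed
        thus ?thesis using ii x0 analytic_imp_holomorphic by blast
      qed
      obtain d where d: "d > 0" "\<And>z. dist z w < d \<Longrightarrow> dist (exp z) (exp w) < x0"
        using continuous_on_exp[of UNIV "\<lambda>z. z", unfolded continuous_on_iff] x0 by fastforce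
      define e where "e = min d pi"
      have e: "e > 0" unfolding e_def using d by simp
      have inb: "exp z \<in> ball (complex_of_real x0) x0" if "z \<in> ball w e" for z
        using d(2)[of z] that ew unfolding e_def by (simp add: dist_commute)
      have Gg: "G z = glued g (k - 1) (exp z)" if z: "z \<in> ball w e" for z
      proof -
        have "\<bar>Im z - Im w\<bar> < e"
          using z abs_Im_le_cmod[of "z - w"] by (simp add: dist_norm norm_minus_commute)
        hence close: "\<bar>Im z - 2 * pi * of_int k\<bar> < pi" unfolding e_def Imw by auto
        have ImE: "Im (exp z) = exp (Re z) * sin (Im z - 2 * pi * of_int k)"
          by (simp add: Im_exp sin_shift)
        consider "Im z > 2 * pi * of_int k" | "Im z = 2 * pi * of_int k" | "Im z < 2 * pi * of_int k"
          by linarith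
        thus ?thesis
        proof cases
          case 1
          hence kz: "kk z = k" unfolding kk_def using close by (intro floor_2pi) auto
          hence thz: "th z = Im z - 2 * pi * of_int k" unfolding th_def by simp
          have "sin (Im z - 2 * pi * of_int k) > 0" using 1 close by (intro sin_gt_zero) auto
          hence "Im (exp z) > 0" using ImE by simp
          moreover have "G z = g k (exp z)" using Geq[of z] thz 1 kz by simp
          ultimately show ?thesis unfolding glued_def by simp
        next
          case 2
          hence kz: "kk z = k" unfolding kk_def by (intro floor_2pi) auto
          hence thz: "th z = 0" unfolding th_def using 2 by simp
          have ez: "exp z = complex_of_real (exp (Re z))"
            using exp_cis_shift[of z k] 2 by simp
          have "G z = bplus (g k) (exp (Re z))" unfolding G_def polar_val_def kz thz by simp
          also have "\<dots> = bminus (g (k - 1)) (exp (Re z))" using i by simp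
          finally show ?thesis unfolding glued_def ez by simp
        next
          case 3
          hence kz: "kk z = k - 1" unfolding kk_def using close by (intro floor_2pi) (auto simp: algebra_simps)
          hence thz: "th z = Im z - 2 * pi * of_int k + 2 * pi" unfolding th_def kz by (simp add: algebra_simps)
          have "sin (Im z - 2 * pi * of_int k + pi) > 0" using 3 close by (intro sin_gt_zero) auto
          hence "sin (Im z - 2 * pi * of_int k) < 0" by (simp add: sin_add)
          hence "Im (exp z) < 0" using ImE by (simp add: mult_pos_neg)
          moreover have "G z = g (k - 1) (exp z)" using Geq[of z] thz 3 kz close by simp
          ultimately show ?thesis unfolding glued_def by simp
        qed
      qed
      have "(glued g (k - 1) \<circ> exp) holomorphic_on ball w e"
        by (rule holomorphic_on_compose_gen[OF _ hol]) (use inb in \<open>auto intro!: holomorphic_intros\<close>)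
      hence "G holomorphic_on ball w e"
        by (rule holomorphic_transform) (use Gg in auto)
      thus ?thesis using e by blast
    qed
  qed
  hence Gh: "G holomorphic_on UNIV" by (rule analytic_imp_holomorphic)
  show ?thesis
    by (rule exI[of _ G], rule exI[of _ C]) (use Gh bound real in simp)
qed

lemma alg_aux:
  fixes a w D q p cc v :: complex
  assumes "a * w = D" "a * q = p"
  shows "a * (p * w + (- cc * q) * v) + cc * (p * v) = p * D"
proof -
  have "a * (p * w + (- cc * q) * v) + cc * (p * v) = p * (a * w) - cc * (a * q) * v + cc * (p * v)"
    by (simp add: algebra_simps)
  also have "\<dots> = p * D" using assms by simp
  finally show ?thesis .
qed

lemma mellin_iter:
  fixes G :: "complex \<Rightarrow> complex" and f :: "real \<Rightarrow> complex"
  assumes holo: "G holomorphic_on UNIV"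
    and real: "\<And>s. G (of_real s) = of_real (exp s powr c) * f (exp s)"
  shows "x > 0 \<Longrightarrow> (mellin_deriv c ^^ r) f x = of_real (x powr -c) * (deriv ^^ r) G (of_real (ln x))"
proof (induction r arbitrary: x)
  case 0
  have "of_real (x powr -c) * (deriv ^^ 0) G (of_real (ln x)) = of_real (x powr -c) * (of_real (x powr c) * f x)"
    using 0 real[of "ln x"] by simp
  also have "\<dots> = of_real (x powr -c * x powr c) * f x" by simp
  also have "x powr -c * x powr c = 1" using 0 by (simp add: powr_add[symmetric])
  finally show ?case by simp
next
  case (Suc r)
  define Fr where "Fr = (deriv ^^ r) G"
  have Frh: "Fr holomorphic_on UNIV" unfolding Fr_def using holo by (intro holomorphic_higher_deriv) auto
  have dFr: "(Fr has_field_derivative deriv Fr z) (at z)" for z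
    using Frh by (simp add: DERIV_deriv_iff_field_differentiable holomorphic_on_imp_differentiable_at)
  define H where "H = (\<lambda>y. complex_of_real (y powr -c) * Fr (of_real (ln y)))"
  have d1: "((\<lambda>y. complex_of_real (y powr -c)) has_vector_derivative of_real (-c * x powr (-c - 1))) (at x)"
    by (rule has_vector_derivative_of_real) (rule has_real_derivative_powr[OF Suc.prems])
  have dln: "(ln has_vector_derivative (1/x)) (at x)"
    using DERIV_ln_divide[OF Suc.prems] by (simp add: has_real_derivative_iff_has_vector_derivative)
  have dF: "((\<lambda>t. Fr (of_real t)) has_vector_derivative deriv Fr (of_real (ln x))) (at (ln x))"
    by (rule has_vector_derivative_real_field[OF dFr])
  have d2: "((\<lambda>y. Fr (of_real (ln y))) has_vector_derivative ((1/x) *\<^sub>R deriv Fr (of_real (ln x)))) (at x)"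
    using vector_diff_chain_at[OF dln dF] by (simp add: o_def)
  have dH: "(H has_vector_derivative
      (of_real (x powr -c) * ((1/x) *\<^sub>R deriv Fr (of_real (ln x))) + of_real (-c * x powr (-c - 1)) * Fr (of_real (ln x)))) (at x)"
    unfolding H_def by (rule has_vector_derivative_mult[OF d1 d2])
  have dh: "((mellin_deriv c ^^ r) f has_vector_derivative
      (of_real (x powr -c) * ((1/x) *\<^sub>R deriv Fr (of_real (ln x))) + of_real (-c * x powr (-c - 1)) * Fr (of_real (ln x)))) (at x)"
    by (rule has_vector_derivative_transform_within_open[OF dH, of "{0<..}"]) (use Suc in \<open>auto simp: H_def Fr_def\<close>)
  have pw: "x * x powr (-c - 1) = x powr -c"
  proof -
    have "x powr (-c - 1) = x powr -c / x powr 1" by (rule powr_diff)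
    thus ?thesis using Suc.prems by simp
  qed
  have pw': "complex_of_real x * complex_of_real (x powr (-c - 1)) = complex_of_real (x powr -c)"
    using pw by (metis of_real_mult)
  have "(mellin_deriv c ^^ Suc r) f x = mellin_deriv c ((mellin_deriv c ^^ r) f) x" by simp
  also have "\<dots> = of_real x * (of_real (x powr -c) * ((1/x) *\<^sub>R deriv Fr (of_real (ln x))) + of_real (-c * x powr (-c - 1)) * Fr (of_real (ln x)))
       + of_real c * (of_real (x powr -c) * Fr (of_real (ln x)))"
    unfolding mellin_deriv_def vector_derivative_at[OF dh] Suc.IH[OF Suc.prems] Fr_def ..
  also have "\<dots> = of_real (x powr -c) * deriv Fr (of_real (ln x))"
  proof -
    have "of_real x * ((1/x) *\<^sub>R deriv Fr (of_real (ln x))) = deriv Fr (of_real (ln x))"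
      using Suc.prems by (simp add: scaleR_conv_of_real)
    moreover have "complex_of_real (-c * x powr (-c - 1)) = - of_real c * of_real (x powr (-c - 1))" by simp
    ultimately show ?thesis using alg_aux[OF _ pw'] by metis
  qed
  also have "deriv Fr = (deriv ^^ Suc r) G" unfolding Fr_def by simp
  finally show ?case .
qed

lemma deriv_growth:
  fixes G :: "complex \<Rightarrow> complex"
  assumes holo: "G holomorphic_on UNIV" and bd: "\<And>z. norm (G z) \<le> C * exp (T * \<bar>Im z\<bar>)" and T: "T > 0"
  shows "\<exists>M. \<forall>z. norm ((deriv ^^ r) G z) \<le> M * exp (T * \<bar>Im z\<bar>)"
proof (cases "r = 0")
  case True thus ?thesis using bd by auto
next
  case False
  have C: "C \<ge> 0" using order_trans[OF norm_ge_zero bd[of 0]] by simp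
  have "norm ((deriv ^^ r) G z) \<le> (fact r * (C * exp T + 1)) * exp (T * \<bar>Im z\<bar>)" for z
  proof -
    define B0 where "B0 = C * exp (T * (\<bar>Im z\<bar> + 1)) + 1"
    have "norm ((deriv ^^ r) G z) \<le> fact r * B0 / 1 ^ r"
    proof (rule Cauchy_higher_deriv_bound)
      show "G holomorphic_on ball z 1" using holo by (rule holomorphic_on_subset) auto
      show "continuous_on (cball z 1) G"
        using holo holomorphic_on_imp_continuous_on continuous_on_subset by blast
      show "(0::real) < 1" "0 < r" using False by auto
      fix w assume w: "w \<in> ball z 1"
      have "\<bar>Im w\<bar> \<le> \<bar>Im z\<bar> + \<bar>Im (w - z)\<bar>" by simp
      also have "\<bar>Im (w - z)\<bar> \<le> norm (w - z)" by (rule abs_Im_le_cmod)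
      also have "norm (w - z) < 1" using w by (simp add: dist_norm norm_minus_commute)
      finally have "\<bar>Im w\<bar> \<le> \<bar>Im z\<bar> + 1" by simp
      hence "exp (T * \<bar>Im w\<bar>) \<le> exp (T * (\<bar>Im z\<bar> + 1))" using T by simp
      hence "C * exp (T * \<bar>Im w\<bar>) \<le> C * exp (T * (\<bar>Im z\<bar> + 1))" using C by (rule mult_left_mono)
      hence "norm (G w) < B0" using bd[of w] unfolding B0_def by linarith
      thus "G w \<in> ball 0 B0" by simp
    qed
    also have "fact r * B0 / 1 ^ r = fact r * B0" by simp
    also have "B0 \<le> (C * exp T + 1) * exp (T * \<bar>Im z\<bar>)"
    proof -
      have e1: "exp (T * \<bar>Im z\<bar>) \<ge> 1" using T by simp
      have "B0 = C * exp T * exp (T * \<bar>Im z\<bar>) + 1" unfolding B0_def by (simp add: algebra_simps exp_add)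
      thus ?thesis using e1 by (simp add: algebra_simps)
    qed
    hence "fact r * B0 \<le> fact r * ((C * exp T + 1) * exp (T * \<bar>Im z\<bar>))" by (intro mult_left_mono) auto
    finally show ?thesis by (simp add: mult.assoc)
  qed
  thus ?thesis by blast
qed

theorem theorem5:
  fixes c T :: real and f :: "real \<Rightarrow> complex" and r :: nat
  assumes "T > 0" and "mellin_bernstein c T f"
  shows "X2 c ((mellin_deriv c ^^ r) f) \<and>
         X2_norm c ((mellin_deriv c ^^ r) f) \<le> T ^ r * X2_norm c f"
proof -
  note T = assms(1) and mb = assms(2)
  have X2f: "X2 c f" using mb unfolding mellin_bernstein_def by (rule conjunct1)
  obtain G C where Gh: "G holomorphic_on UNIV" and Gb: "\<And>z. norm (G z) \<le> C * exp (T * \<bar>Im z\<bar>)"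
    and Gr: "\<And>s. G (complex_of_real s) = complex_of_real (exp s powr c) * f (exp s)"
    using build_G[OF mb] by blast
  define F where "F = (\<lambda>n. (deriv ^^ n) G)"
  have Fh: "F n holomorphic_on UNIV" for n unfolding F_def using Gh by (intro holomorphic_higher_deriv) auto
  have Fb: "\<exists>M. \<forall>z. norm (F n z) \<le> M * exp (T * \<bar>Im z\<bar>)" for n
    unfolding F_def by (rule deriv_growth[OF Gh Gb T])
  have Fd: "deriv (F n) = F (Suc n)" for n unfolding F_def by simp
  have Fmeas[measurable]: "F n \<in> borel_measurable borel" for n
    by (rule borel_measurable_continuous_onI) (use Fh holomorphic_on_imp_continuous_on in blast)
  have mel: "(mellin_deriv c ^^ n) f x = complex_of_real (x powr -c) * F n (complex_of_real (ln x))" if "x > 0" for n x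
    unfolding F_def by (rule mellin_iter[OF Gh Gr that])
  define Q where "Q = (\<lambda>n. \<integral>\<^sup>+x. ennreal (indicator {0<..} x * (cmod (F n (complex_of_real (ln x))))\<^sup>2 / x) \<partial>lborel)"
  define NN where "NN = (\<lambda>h::real \<Rightarrow> complex. \<integral>\<^sup>+x. ennreal (indicator {0<..} x *\<^sub>R ((cmod (h x))\<^sup>2 * x powr (2 * c - 1))) \<partial>lborel)"
  have pwx: "(cmod (complex_of_real (x powr -c) * z))\<^sup>2 * x powr (2 * c - 1) = (cmod z)\<^sup>2 / x" if "x > 0" for x z
  proof -
    have "(cmod (complex_of_real (x powr -c) * z))\<^sup>2 = (x powr -c)\<^sup>2 * (cmod z)\<^sup>2"
      by (simp add: norm_mult power_mult_distrib)
    also have "(x powr -c)\<^sup>2 = x powr (-c) * x powr (-c)" by (simp add: power2_eq_square)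
    also have "\<dots> = x powr (-2 * c)" using that by (simp add: powr_add[symmetric])
    finally have "(cmod (complex_of_real (x powr -c) * z))\<^sup>2 * x powr (2 * c - 1) = (cmod z)\<^sup>2 * (x powr (-2 * c) * x powr (2 * c - 1))"
      by (simp add: algebra_simps)
    also have "x powr (-2 * c) * x powr (2 * c - 1) = x powr (-1)" using that by (simp add: powr_add[symmetric])
    also have "x powr (-1) = 1 / x" using that by (simp add: powr_minus_divide)
    finally show ?thesis by simp
  qed
  have NNQ: "NN ((mellin_deriv c ^^ n) f) = Q n" for n
    unfolding NN_def Q_def
  proof (rule nn_integral_cong)
    fix x :: real
    show "ennreal (indicator {0<..} x *\<^sub>R ((cmod ((mellin_deriv c ^^ n) f x))\<^sup>2 * x powr (2 * c - 1)))
        = ennreal (indicator {0<..} x * (cmod (F n (complex_of_real (ln x))))\<^sup>2 / x)"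
    proof (cases "x > 0")
      case True thus ?thesis using mel[OF True] pwx[OF True] by simp
    qed simp
  qed
  have Qstep: "Q (Suc n) \<le> ennreal (T\<^sup>2) * Q n" for n
  proof -
    obtain M where M: "\<And>z. norm (F n z) \<le> M * exp (T * \<bar>Im z\<bar>)" using Fb[of n] by blast
    have lnx: "ln (x * exp (eta T k)) = ln x + eta T k" if "x > 0" for x k
      using that by (simp add: ln_mult)
    show ?thesis unfolding Q_def
    proof (rule L2_lemma[where \<beta> = "beta T" and \<eta> = "eta T"])
      show "(\<lambda>x. cmod (F n (complex_of_real (ln x)))) \<in> borel_measurable borel" by measurable
      show "(\<lambda>x. cmod (F (Suc n) (complex_of_real (ln x)))) \<in> borel_measurable borel" by measurable
      show "\<And>x. 0 \<le> cmod (F n (complex_of_real (ln x)))" "\<And>x. 0 \<le> cmod (F (Suc n) (complex_of_real (ln x)))" by auto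
      show "\<And>k. 0 \<le> beta T k" using beta_nonneg[OF T] .
      show "beta T sums T" by (rule beta_sums[OF T])
      fix x :: real assume x: "x > 0"
      show "summable (\<lambda>k. beta T k * cmod (F n (complex_of_real (ln (x * exp (eta T k))))))"
        using boas(1)[OF T Fh M, of "ln x"] by (simp add: lnx[OF x])
      show "cmod (F (Suc n) (complex_of_real (ln x))) \<le> (\<Sum>k. beta T k * cmod (F n (complex_of_real (ln (x * exp (eta T k))))))"
        using boas(2)[OF T Fh M, of "ln x"] by (simp add: lnx[OF x] Fd)
    qed
  qed
  have Qpow: "Q n \<le> ennreal (T ^ (2 * n)) * Q 0" for n
  proof (induction n)
    case 0 thus ?case by simp
  next
    case (Suc n)
    have "Q (Suc n) \<le> ennreal (T\<^sup>2) * Q n" by (rule Qstep)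
    also have "\<dots> \<le> ennreal (T\<^sup>2) * (ennreal (T ^ (2 * n)) * Q 0)" by (intro mult_left_mono Suc.IH) auto
    also have "\<dots> = ennreal (T\<^sup>2 * T ^ (2 * n)) * Q 0" using T by (simp add: ennreal_mult mult.assoc)
    also have "T\<^sup>2 * T ^ (2 * n) = T ^ (2 * Suc n)" by (simp add: power_add[symmetric])
    finally show ?case .
  qed
  have meas_int: "(\<lambda>x. indicator {0<..} x *\<^sub>R ((cmod ((mellin_deriv c ^^ n) f x))\<^sup>2 * x powr (2 * c - 1))) \<in> borel_measurable lborel" for n
  proof -
    have "(\<lambda>x. indicator {0<..} x *\<^sub>R ((cmod ((mellin_deriv c ^^ n) f x))\<^sup>2 * x powr (2 * c - 1)))
        = (\<lambda>x. indicator {0<..} x * ((cmod (F n (complex_of_real (ln x))))\<^sup>2 / x))"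
    proof
      fix x :: real show "indicator {0<..} x *\<^sub>R ((cmod ((mellin_deriv c ^^ n) f x))\<^sup>2 * x powr (2 * c - 1))
        = indicator {0<..} x * ((cmod (F n (complex_of_real (ln x))))\<^sup>2 / x)"
        by (cases "x > 0") (simp_all add: mel pwx)
    qed
    also have "\<dots> \<in> borel_measurable lborel" by measurable
    finally show ?thesis .
  qed
  have nonneg: "0 \<le> indicator {0<..} x *\<^sub>R ((cmod (h x))\<^sup>2 * x powr (2 * c - 1))" for h :: "real \<Rightarrow> complex" and x :: real
    by simp
  have norm_eq: "X2_norm c ((mellin_deriv c ^^ n) f) = sqrt (enn2real (Q n))" for n
  proof -
    have "X2_norm c ((mellin_deriv c ^^ n) f) = sqrt (enn2real (NN ((mellin_deriv c ^^ n) f)))"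
      unfolding X2_norm_def set_lebesgue_integral_def NN_def
      by (subst integral_eq_nn_integral[OF meas_int]) auto
    thus ?thesis unfolding NNQ .
  qed
  have Q0: "Q 0 < \<infinity>"
  proof -
    have "set_integrable lborel {0<..} (\<lambda>u. (cmod (f u))\<^sup>2 * u powr (2 * c - 1))"
      using X2f unfolding X2_def by blast
    hence "integrable lborel (\<lambda>x. indicator {0<..} x *\<^sub>R ((cmod (f x))\<^sup>2 * x powr (2 * c - 1)))"
      unfolding set_integrable_def .
    hence "(\<integral>\<^sup>+x. ennreal (norm (indicator {0<..} x *\<^sub>R ((cmod (f x))\<^sup>2 * x powr (2 * c - 1)))) \<partial>lborel) < \<infinity>"
      unfolding integrable_iff_bounded by blast
    moreover have "(\<integral>\<^sup>+x. ennreal (norm (indicator {0<..} x *\<^sub>R ((cmod (f x))\<^sup>2 * x powr (2 * c - 1)))) \<partial>lborel) = NN f"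
      unfolding NN_def by (intro nn_integral_cong) (simp add: abs_mult)
    moreover have "NN f = Q 0" using NNQ[of 0] by simp
    ultimately show ?thesis by simp
  qed
  have "ennreal (T ^ (2 * r)) * Q 0 < \<infinity>" using Q0 by (simp add: ennreal_mult_less_top)
  hence Qr: "Q r < \<infinity>" by (rule le_less_trans[OF Qpow])
  have X2h: "X2 c ((mellin_deriv c ^^ r) f)"
    unfolding X2_def
  proof
    show "set_borel_measurable lborel {0<..} ((mellin_deriv c ^^ r) f)"
    proof -
      have "(\<lambda>x. indicator {0<..} x *\<^sub>R (mellin_deriv c ^^ r) f x)
          = (\<lambda>x. indicator {0<..} x *\<^sub>R (complex_of_real (x powr -c) * F r (complex_of_real (ln x))))"
      proof
        fix x :: real show "indicator {0<..} x *\<^sub>R (mellin_deriv c ^^ r) f x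
          = indicator {0<..} x *\<^sub>R (complex_of_real (x powr -c) * F r (complex_of_real (ln x)))"
          by (cases "x > 0") (simp_all add: mel)
      qed
      also have "\<dots> \<in> borel_measurable lborel" by measurable
      finally show ?thesis unfolding set_borel_measurable_def .
    qed
    show "set_integrable lborel {0<..} (\<lambda>u. (cmod ((mellin_deriv c ^^ r) f u))\<^sup>2 * u powr (2 * c - 1))"
      unfolding set_integrable_def
    proof (rule integrableI_nonneg)
      show "(\<lambda>x. indicator {0<..} x *\<^sub>R ((cmod ((mellin_deriv c ^^ r) f x))\<^sup>2 * x powr (2 * c - 1))) \<in> borel_measurable lborel"
        by (rule meas_int)
      show "AE x in lborel. 0 \<le> indicator {0<..} x *\<^sub>R ((cmod ((mellin_deriv c ^^ r) f x))\<^sup>2 * x powr (2 * c - 1))"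
        by simp
      show "(\<integral>\<^sup>+x. ennreal (indicator {0<..} x *\<^sub>R ((cmod ((mellin_deriv c ^^ r) f x))\<^sup>2 * x powr (2 * c - 1))) \<partial>lborel) < \<infinity>"
        using NNQ[of r] Qr unfolding NN_def by simp
    qed
  qed
  have "enn2real (Q r) \<le> enn2real (ennreal (T ^ (2 * r)) * Q 0)"
    by (rule enn2real_mono[OF Qpow]) (use Q0 in \<open>simp add: ennreal_mult_less_top\<close>)
  also have "\<dots> = T ^ (2 * r) * enn2real (Q 0)" using T by (simp add: enn2real_mult)
  finally have le: "enn2real (Q r) \<le> T ^ (2 * r) * enn2real (Q 0)" .
  have "X2_norm c ((mellin_deriv c ^^ r) f) = sqrt (enn2real (Q r))" by (rule norm_eq)
  also have "\<dots> \<le> sqrt (T ^ (2 * r) * enn2real (Q 0))" using le by simp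
  also have "\<dots> = T ^ r * sqrt (enn2real (Q 0))"
  proof -
    have "T ^ (2 * r) = (T ^ r)\<^sup>2" by (simp add: power_mult[symmetric] mult.commute)
    thus ?thesis using T by (simp add: real_sqrt_mult)
  qed
  also have "sqrt (enn2real (Q 0)) = X2_norm c f" using norm_eq[of 0] by simp
  finally show ?thesis using X2h by simp
qed

end
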